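(* Let $(\mathcal A\to\mathcal H)$ be a Hopf algebra in $\mathcal{LM}$. Let $\mathcal G_0(\mathcal H)$ be the group of group-like elements of $\mathcal H$ and $\mathcal G_1(\mathcal A)$ the set of edge-like elements of $\mathcal A$, with maps $s,t:\mathcal G_1(\mathcal A)\to\mathcal G_0(\mathcal H)$ assigning to an edge-like $a$ the group-like elements $s(a),t(a)$ with $\Delta_1(a)=a\otimes t(a)+s(a)\otimes a$. Then the two-sided action of $\mathcal H$ on $\mathcal A$ restricts to a two-sided action of $\mathcal G_0(\mathcal H)$ on $\mathcal G_1(\mathcal A)$, and $(\mathcal G_0(\mathcal H)\overset{s}{\underset{t}{\leftleftarrows}}\mathcal G_1(\mathcal A))$ is a group-like graph.
   Context: Over a field $\mathbf k$ of characteristic $0$, the category $\mathcal{LM}$ has objects linear maps $U\to V$ and tensor product $(U\to V)\otimes(U'\to V')=(U\otimes V'+V\otimes U'\to V\otimes V')$. A Hopf algebra in $\mathcal{LM}$ is $(\mathcal A\xrightarrow{f}\mathcal H)$ with $\mathcal H$ a Hopf algebra (coproduct $\Delta_0$, antipode $S_0$), $\mathcal A$ an $\mathcal H$-bimodule, $f$ a bimodule map, a bimodule map $\Delta_1:\mathcal A\to\mathcal A\otimes\mathcal H+\mathcal H\otimes\mathcal A$ with $\Delta_0f=(f\otimes\mathrm{Id}+\mathrm{Id}\otimes f)\Delta_1$, and $S_1:\mathcal A\to\mathcal A$ with $fS_1=S_0f$ and $\mu\circ(S_1\otimes\mathrm{Id}+S_0\otimes\mathrm{Id})\circ\Delta_1=\mu\circ(\mathrm{Id}\otimes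 S_0+\mathrm{Id}\otimes S_1)\circ\Delta_1=0$. An element $a\in\mathcal A$ is edge-like if $\Delta_1(a)=a\otimes t(a)+s(a)\otimes a$ for some group-like elements $s(a),t(a)$ of $\mathcal H$. A group-like graph is a directed graph $(V\overset{s}{\underset{t}{\leftleftarrows}}E)$ together with an associative graph morphism from its Cartesian square (vertices $V\times V$, arrows $E\times V\sqcup V\times E$) to itself such that the induced semigroup structure on $V$ is a group; here the multiplication is given on vertices by the product in $\mathcal G_0(\mathcal H)$ and on arrows by the two-sided action. *)

theory Defs
  imports Main "HOL.Vector_Spaces"
begin

section \<open>Tensor products of vector spaces (standard construction)\<close>

text \<open>An element of V (x) W is represented (Sweedler style) by a finite list of pairs
[(v1,w1),...,(vn,wn)] standing for the sum v1 (x) w1 + ... + vn (x) wn.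
Two representatives denote the same tensor iff the difference of their formal
sums in the free vector space on V x W lies in the subspace spanned by the
bilinearity relations, i.e. V (x) W = F(V x W) / R.\<close>

definition delta :: "'x \<Rightarrow> 'x \<Rightarrow> 'k::zero_neq_one" where
  "delta p = (\<lambda>q. if q = p then 1 else 0)"

definition fsum :: "'x list \<Rightarrow> 'x \<Rightarrow> 'k::semiring_1" where
  "fsum xs = (\<lambda>p. of_nat (count_list xs p))"

inductive_set tens_rel ::
  "('k::field \<Rightarrow> 'v::ab_group_add \<Rightarrow> 'v) \<Rightarrow> ('k \<Rightarrow> 'w::ab_group_add \<Rightarrow> 'w)
    \<Rightarrow> (('v \<times> 'w) \<Rightarrow> 'k) set"
  for sv sw where
  zero: "(\<lambda>_. 0) \<in> tens_rel sv sw"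
| add: "x \<in> tens_rel sv sw \<Longrightarrow> y \<in> tens_rel sv sw \<Longrightarrow> (\<lambda>p. x p + y p) \<in> tens_rel sv sw"
| smult: "x \<in> tens_rel sv sw \<Longrightarrow> (\<lambda>p. c * x p) \<in> tens_rel sv sw"
| addL: "(\<lambda>p. delta (v + v', w) p - delta (v, w) p - delta (v', w) p) \<in> tens_rel sv sw"
| addR: "(\<lambda>p. delta (v, w + w') p - delta (v, w) p - delta (v, w') p) \<in> tens_rel sv sw"
| scL: "(\<lambda>p. delta (sv c v, w) p - c * delta (v, w) p) \<in> tens_rel sv sw"
| scR: "(\<lambda>p. delta (v, sw c w) p - c * delta (v, w) p) \<in> tens_rel sv sw"

definition tens_eq ::
  "('k::field \<Rightarrow> 'v::ab_group_add \<Rightarrow> 'v) \<Rightarrow> ('k \<Rightarrow> 'w::ab_group_add \<Rightarrow> 'w)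
    \<Rightarrow> ('v \<times> 'w) list \<Rightarrow> ('v \<times> 'w) list \<Rightarrow> bool" where
  "tens_eq sv sw xs ys \<longleftrightarrow> (\<lambda>p. fsum xs p - fsum ys p) \<in> tens_rel sv sw"

inductive_set tens3_rel ::
  "('k::field \<Rightarrow> 'h::ab_group_add \<Rightarrow> 'h) \<Rightarrow> (('h \<times> 'h \<times> 'h) \<Rightarrow> 'k) set"
  for s where
  zero: "(\<lambda>_. 0) \<in> tens3_rel s"
| add: "x \<in> tens3_rel s \<Longrightarrow> y \<in> tens3_rel s \<Longrightarrow> (\<lambda>p. x p + y p) \<in> tens3_rel s"
| smult: "x \<in> tens3_rel s \<Longrightarrow> (\<lambda>p. c * x p) \<in> tens3_rel s"
| add1: "(\<lambda>p. delta (u + u', v, w) p - delta (u, v, w) p - delta (u', v, w) p) \<in> tens3_rel s"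
| add2: "(\<lambda>p. delta (u, v + v', w) p - delta (u, v, w) p - delta (u, v', w) p) \<in> tens3_rel s"
| add3: "(\<lambda>p. delta (u, v, w + w') p - delta (u, v, w) p - delta (u, v, w') p) \<in> tens3_rel s"
| sc1: "(\<lambda>p. delta (s c u, v, w) p - c * delta (u, v, w) p) \<in> tens3_rel s"
| sc2: "(\<lambda>p. delta (u, s c v, w) p - c * delta (u, v, w) p) \<in> tens3_rel s"
| sc3: "(\<lambda>p. delta (u, v, s c w) p - c * delta (u, v, w) p) \<in> tens3_rel s"

definition tens3_eq ::
  "('k::field \<Rightarrow> 'h::ab_group_add \<Rightarrow> 'h)
    \<Rightarrow> ('h \<times> 'h \<times> 'h) list \<Rightarrow> ('h \<times> 'h \<times> 'h) list \<Rightarrow> bool" where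
  "tens3_eq s xs ys \<longleftrightarrow> (\<lambda>p. fsum xs p - fsum ys p) \<in> tens3_rel s"

definition tens_scale :: "('k \<Rightarrow> 'v \<Rightarrow> 'v) \<Rightarrow> 'k \<Rightarrow> ('v \<times> 'w) list \<Rightarrow> ('v \<times> 'w) list" where
  "tens_scale sv c xs = map (\<lambda>(v, w). (sv c v, w)) xs"

definition linear_map :: "('k \<Rightarrow> 'v::ab_group_add \<Rightarrow> 'v) \<Rightarrow> ('k \<Rightarrow> 'w::ab_group_add \<Rightarrow> 'w)
    \<Rightarrow> ('v \<Rightarrow> 'w) \<Rightarrow> bool" where
  "linear_map sv sw g \<longleftrightarrow> (\<forall>x y. g (x + y) = g x + g y) \<and> (\<forall>c x. g (sv c x) = sw c (g x))"

section \<open>Hopf algebras over k\<close>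

definition hopf_algebra ::
  "('k::field_char_0 \<Rightarrow> 'h::ring_1 \<Rightarrow> 'h) \<Rightarrow> ('h \<Rightarrow> ('h \<times> 'h) list) \<Rightarrow> ('h \<Rightarrow> 'k)
    \<Rightarrow> ('h \<Rightarrow> 'h) \<Rightarrow> bool" where
  "hopf_algebra sH \<Delta> \<epsilon> S \<longleftrightarrow>
     vector_space sH \<and>
     (\<forall>c x y. sH c (x * y) = sH c x * y \<and> sH c (x * y) = x * sH c y) \<and>
     \<comment> \<open>coproduct and counit are linear\<close>
     (\<forall>x y. tens_eq sH sH (\<Delta> (x + y)) (\<Delta> x @ \<Delta> y)) \<and>
     (\<forall>c x. tens_eq sH sH (\<Delta> (sH c x)) (tens_scale sH c (\<Delta> x))) \<and>
     linear_map sH (*) \<epsilon> \<and>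
     \<comment> \<open>coassociativity\<close>
     (\<forall>h. tens3_eq sH
        (concat (map (\<lambda>(x, y). map (\<lambda>(u, v). (u, v, y)) (\<Delta> x)) (\<Delta> h)))
        (concat (map (\<lambda>(x, y). map (\<lambda>(u, v). (x, u, v)) (\<Delta> y)) (\<Delta> h)))) \<and>
     \<comment> \<open>counit\<close>
     (\<forall>h. sum_list (map (\<lambda>(x, y). sH (\<epsilon> x) y) (\<Delta> h)) = h) \<and>
     (\<forall>h. sum_list (map (\<lambda>(x, y). sH (\<epsilon> y) x) (\<Delta> h)) = h) \<and>
     \<comment> \<open>coproduct and counit are algebra maps\<close>
     (\<forall>x y. tens_eq sH sH (\<Delta> (x * y))
        (concat (map (\<lambda>(a, b). map (\<lambda>(c, d). (a * c, b * d)) (\<Delta> y)) (\<Delta> x)))) \<and>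
     tens_eq sH sH (\<Delta> 1) [(1, 1)] \<and>
     (\<forall>x y. \<epsilon> (x * y) = \<epsilon> x * \<epsilon> y) \<and> \<epsilon> 1 = 1 \<and>
     \<comment> \<open>antipode\<close>
     linear_map sH sH S \<and>
     (\<forall>h. sum_list (map (\<lambda>(x, y). S x * y) (\<Delta> h)) = sH (\<epsilon> h) 1) \<and>
     (\<forall>h. sum_list (map (\<lambda>(x, y). x * S y) (\<Delta> h)) = sH (\<epsilon> h) 1)"

definition group_like :: "('k::field \<Rightarrow> 'h::ring_1 \<Rightarrow> 'h) \<Rightarrow> ('h \<Rightarrow> ('h \<times> 'h) list)
    \<Rightarrow> ('h \<Rightarrow> 'k) \<Rightarrow> 'h \<Rightarrow> bool" where
  "group_like sH \<Delta> \<epsilon> g \<longleftrightarrow> tens_eq sH sH (\<Delta> g) [(g, g)] \<and> \<epsilon> g = 1"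

section \<open>Hopf algebras in the category LM\<close>

text \<open>The tensor product in LM: (U->V) (x) (U'->V') = (U (x) V' (+) V (x) U' -> V (x) V'),
the sum being a direct sum. Hence an element of A (x) H + H (x) A is represented
by a pair of representatives (one in A (x) H, one in H (x) A).\<close>

definition dsum_eq ::
  "('k::field \<Rightarrow> 'h::ab_group_add \<Rightarrow> 'h) \<Rightarrow> ('k \<Rightarrow> 'a::ab_group_add \<Rightarrow> 'a)
    \<Rightarrow> (('a \<times> 'h) list \<times> ('h \<times> 'a) list) \<Rightarrow> (('a \<times> 'h) list \<times> ('h \<times> 'a) list) \<Rightarrow> bool" where
  "dsum_eq sH sA X Y \<longleftrightarrow> tens_eq sA sH (fst X) (fst Y) \<and> tens_eq sH sA (snd X) (snd Y)"

definition dsum_lact ::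
  "('h::ring_1 \<Rightarrow> ('h \<times> 'h) list) \<Rightarrow> ('h \<Rightarrow> 'a \<Rightarrow> 'a) \<Rightarrow> 'h
    \<Rightarrow> (('a \<times> 'h) list \<times> ('h \<times> 'a) list) \<Rightarrow> (('a \<times> 'h) list \<times> ('h \<times> 'a) list)" where
  "dsum_lact \<Delta> lact h X =
     (concat (map (\<lambda>(h1, h2). map (\<lambda>(a, y). (lact h1 a, h2 * y)) (fst X)) (\<Delta> h)),
      concat (map (\<lambda>(h1, h2). map (\<lambda>(y, a). (h1 * y, lact h2 a)) (snd X)) (\<Delta> h)))"

definition dsum_ract ::
  "('h::ring_1 \<Rightarrow> ('h \<times> 'h) list) \<Rightarrow> ('a \<Rightarrow> 'h \<Rightarrow> 'a)
    \<Rightarrow> (('a \<times> 'h) list \<times> ('h \<times> 'a) list) \<Rightarrow> 'h \<Rightarrow> (('a \<times> 'h) list \<times> ('h \<times> 'a) list)" where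
  "dsum_ract \<Delta> ract X h =
     (concat (map (\<lambda>(h1, h2). map (\<lambda>(a, y). (ract a h1, y * h2)) (fst X)) (\<Delta> h)),
      concat (map (\<lambda>(h1, h2). map (\<lambda>(y, a). (y * h1, ract a h2)) (snd X)) (\<Delta> h)))"

definition hopf_LM ::
  "('k::field_char_0 \<Rightarrow> 'h::ring_1 \<Rightarrow> 'h) \<Rightarrow> ('h \<Rightarrow> ('h \<times> 'h) list) \<Rightarrow> ('h \<Rightarrow> 'k)
    \<Rightarrow> ('h \<Rightarrow> 'h)
    \<Rightarrow> ('k \<Rightarrow> 'a::ab_group_add \<Rightarrow> 'a) \<Rightarrow> ('h \<Rightarrow> 'a \<Rightarrow> 'a) \<Rightarrow> ('a \<Rightarrow> 'h \<Rightarrow> 'a)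
    \<Rightarrow> ('a \<Rightarrow> 'h) \<Rightarrow> ('a \<Rightarrow> ('a \<times> 'h) list \<times> ('h \<times> 'a) list) \<Rightarrow> ('a \<Rightarrow> 'a) \<Rightarrow> bool" where
  "hopf_LM sH \<Delta>0 \<epsilon> S0 sA lact ract f \<Delta>1 S1 \<longleftrightarrow>
     hopf_algebra sH \<Delta>0 \<epsilon> S0 \<and>
     \<comment> \<open>A is an H-bimodule\<close>
     vector_space sA \<and>
     (\<forall>x y a. lact (x + y) a = lact x a + lact y a) \<and>
     (\<forall>x a b. lact x (a + b) = lact x a + lact x b) \<and>
     (\<forall>c x a. lact (sH c x) a = sA c (lact x a) \<and> lact x (sA c a) = sA c (lact x a)) \<and>
     (\<forall>x y a. lact (x * y) a = lact x (lact y a)) \<and> (\<forall>a. lact 1 a = a) \<and>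
     (\<forall>x y a. ract a (x + y) = ract a x + ract a y) \<and>
     (\<forall>x a b. ract (a + b) x = ract a x + ract b x) \<and>
     (\<forall>c x a. ract a (sH c x) = sA c (ract a x) \<and> ract (sA c a) x = sA c (ract a x)) \<and>
     (\<forall>x y a. ract a (x * y) = ract (ract a x) y) \<and> (\<forall>a. ract a 1 = a) \<and>
     (\<forall>x y a. lact x (ract a y) = ract (lact x a) y) \<and>
     \<comment> \<open>f is a bimodule map\<close>
     linear_map sA sH f \<and>
     (\<forall>h a. f (lact h a) = h * f a) \<and> (\<forall>h a. f (ract a h) = f a * h) \<and>
     \<comment> \<open>Delta1 is a bimodule map\<close>
     (\<forall>a b. dsum_eq sH sA (\<Delta>1 (a + b)) (fst (\<Delta>1 a) @ fst (\<Delta>1 b), snd (\<Delta>1 a) @ snd (\<Delta>1 b))) \<and>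
     (\<forall>c a. dsum_eq sH sA (\<Delta>1 (sA c a))
        (tens_scale sA c (fst (\<Delta>1 a)), tens_scale sH c (snd (\<Delta>1 a)))) \<and>
     (\<forall>h a. dsum_eq sH sA (\<Delta>1 (lact h a)) (dsum_lact \<Delta>0 lact h (\<Delta>1 a))) \<and>
     (\<forall>h a. dsum_eq sH sA (\<Delta>1 (ract a h)) (dsum_ract \<Delta>0 ract (\<Delta>1 a) h)) \<and>
     \<comment> \<open>compatibility Delta0 f = (f (x) Id + Id (x) f) Delta1\<close>
     (\<forall>a. tens_eq sH sH (\<Delta>0 (f a))
        (map (\<lambda>(b, y). (f b, y)) (fst (\<Delta>1 a)) @ map (\<lambda>(y, b). (y, f b)) (snd (\<Delta>1 a)))) \<and>
     \<comment> \<open>antipode component S1\<close>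
     linear_map sA sA S1 \<and>
     (\<forall>a. f (S1 a) = S0 (f a)) \<and>
     (\<forall>a. sum_list (map (\<lambda>(b, y). ract (S1 b) y) (fst (\<Delta>1 a)))
          + sum_list (map (\<lambda>(y, b). lact (S0 y) b) (snd (\<Delta>1 a))) = 0) \<and>
     (\<forall>a. sum_list (map (\<lambda>(b, y). ract b (S0 y)) (fst (\<Delta>1 a)))
          + sum_list (map (\<lambda>(y, b). lact y (S1 b)) (snd (\<Delta>1 a))) = 0)"

definition edge_like_st where
  "edge_like_st sH \<Delta>0 \<epsilon> sA \<Delta>1 a s t \<longleftrightarrow>
     group_like sH \<Delta>0 \<epsilon> s \<and> group_like sH \<Delta>0 \<epsilon> t \<and>
     dsum_eq sH sA (\<Delta>1 a) ([(a, t)], [(s, a)])"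

definition edge_like where
  "edge_like sH \<Delta>0 \<epsilon> sA \<Delta>1 a \<longleftrightarrow> (\<exists>s t. edge_like_st sH \<Delta>0 \<epsilon> sA \<Delta>1 a s t)"

definition edge_src where
  "edge_src sH \<Delta>0 \<epsilon> sA \<Delta>1 a = (THE s. \<exists>t. edge_like_st sH \<Delta>0 \<epsilon> sA \<Delta>1 a s t)"

definition edge_tgt where
  "edge_tgt sH \<Delta>0 \<epsilon> sA \<Delta>1 a = (THE t. \<exists>s. edge_like_st sH \<Delta>0 \<epsilon> sA \<Delta>1 a s t)"

section \<open>Group-like graphs\<close>

text \<open>A directed graph (V, E, src, tgt) with a graph morphism from its Cartesian
square to itself, given by m on vertices V x V and by the right action r on arrows
E x V and the left action l on arrows V x E, which is associative (on all
vertex and arrow components of the Cartesian cube), and such that (V, m) is a group.\<close>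
definition group_like_graph ::
  "'v set \<Rightarrow> 'e set \<Rightarrow> ('e \<Rightarrow> 'v) \<Rightarrow> ('e \<Rightarrow> 'v) \<Rightarrow> ('v \<Rightarrow> 'v \<Rightarrow> 'v)
    \<Rightarrow> ('e \<Rightarrow> 'v \<Rightarrow> 'e) \<Rightarrow> ('v \<Rightarrow> 'e \<Rightarrow> 'e) \<Rightarrow> bool" where
  "group_like_graph V E src tgt m r l \<longleftrightarrow>
     (\<forall>e\<in>E. src e \<in> V \<and> tgt e \<in> V) \<and>
     (\<forall>x\<in>V. \<forall>y\<in>V. m x y \<in> V) \<and>
     (\<forall>e\<in>E. \<forall>v\<in>V. r e v \<in> E \<and> src (r e v) = m (src e) v \<and> tgt (r e v) = m (tgt e) v) \<and>
     (\<forall>v\<in>V. \<forall>e\<in>E. l v e \<in> E \<and> src (l v e) = m v (src e) \<and> tgt (l v e) = m v (tgt e)) \<and>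
     (\<forall>x\<in>V. \<forall>y\<in>V. \<forall>z\<in>V. m (m x y) z = m x (m y z)) \<and>
     (\<forall>e\<in>E. \<forall>x\<in>V. \<forall>y\<in>V. r (r e x) y = r e (m x y)) \<and>
     (\<forall>x\<in>V. \<forall>e\<in>E. \<forall>y\<in>V. r (l x e) y = l x (r e y)) \<and>
     (\<forall>x\<in>V. \<forall>y\<in>V. \<forall>e\<in>E. l (m x y) e = l x (l y e)) \<and>
     (\<exists>u\<in>V. (\<forall>x\<in>V. m u x = x \<and> m x u = x) \<and> (\<forall>x\<in>V. \<exists>y\<in>V. m x y = u \<and> m y x = u))"

end

theory Submission
  imports Defs "HOL-Library.Function_Algebras"
begin

lemma fsum_Nil[simp]: "fsum [] p = 0" by (simp add: fsum_def)
lemma fsum_Cons: "fsum (x # xs) p = delta x p + fsum xs p"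
  by (auto simp: fsum_def delta_def)
lemma fsum_append[simp]: "fsum (xs @ ys) p = fsum xs p + fsum ys p"
  by (simp add: fsum_def)
lemma fsum_single: "fsum [x] p = delta x p"
  by (simp add: fsum_Cons)

lemma rel_cong: "x \<in> tens_rel sv sw \<Longrightarrow> (\<And>p. x p = y p) \<Longrightarrow> y \<in> tens_rel sv sw"
proof -
  assume "x \<in> tens_rel sv sw" "\<And>p. x p = y p"
  then have "x = y" by auto
  then show ?thesis using \<open>x \<in> tens_rel sv sw\<close> by simp
qed

definition LS :: "('k \<Rightarrow> 'z::comm_monoid_add \<Rightarrow> 'z) \<Rightarrow> ('q \<Rightarrow> 'z) \<Rightarrow> 'q set \<Rightarrow> ('q \<Rightarrow> 'k) \<Rightarrow> 'z" where
  "LS sz \<Psi> S x = (\<Sum>q\<in>S. sz (x q) (\<Psi> q))"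

context module begin

lemma LS_add: "LS scale \<Psi> S (\<lambda>q. x q + y q) = LS scale \<Psi> S x + LS scale \<Psi> S y"
  by (simp add: LS_def scale_left_distrib sum.distrib)
lemma LS_diff: "LS scale \<Psi> S (\<lambda>q. x q - y q) = LS scale \<Psi> S x - LS scale \<Psi> S y"
  by (simp add: LS_def scale_left_diff_distrib sum_subtractf)
lemma LS_smult: "LS scale \<Psi> S (\<lambda>q. c * x q) = scale c (LS scale \<Psi> S x)"
  by (simp add: LS_def scale_sum_right)
lemma LS_delta: "finite S \<Longrightarrow> a \<in> S \<Longrightarrow> LS scale \<Psi> S (delta a) = \<Psi> a"
proof -
  assume "finite S" "a \<in> S"
  have "\<And>q. scale (delta a q) (\<Psi> q) = (if q = a then \<Psi> q else 0)" by (simp add: delta_def)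
  then show ?thesis using \<open>finite S\<close> \<open>a \<in> S\<close> by (simp add: LS_def)
qed
lemma LS_mono: "finite T \<Longrightarrow> {q. x q \<noteq> 0} \<subseteq> S \<Longrightarrow> S \<subseteq> T \<Longrightarrow> LS scale \<Psi> T x = LS scale \<Psi> S x"
  unfolding LS_def
proof (intro sum.mono_neutral_right)
  assume a: "finite T" "{q. x q \<noteq> 0} \<subseteq> S" "S \<subseteq> T"
  then show "finite T" "S \<subseteq> T" by auto
  show "\<forall>i\<in>T - S. x i *s \<Psi> i = 0"
  proof
    fix i assume "i \<in> T - S"
    then have "x i = 0" using a by blast
    then show "x i *s \<Psi> i = 0" by simp
  qed
qed
lemma LS_fsum: "finite S \<Longrightarrow> set xs \<subseteq> S \<Longrightarrow> LS scale \<Psi> S (fsum xs) = sum_list (map \<Psi> xs)"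
proof (induction xs)
  case Nil
  then show ?case by (simp add: LS_def fsum_def)
next
  case (Cons a xs)
  have e: "fsum (a # xs) = (\<lambda>p. delta a p + fsum xs p)" by (simp add: fun_eq_iff fsum_Cons)
  have "LS scale \<Psi> S (fsum (a # xs)) = LS scale \<Psi> S (\<lambda>p. delta a p + fsum xs p)"
    by (simp only: e)
  also have "\<dots> = LS scale \<Psi> S (delta a) + LS scale \<Psi> S (fsum xs)"
    by (rule LS_add)
  finally have "LS scale \<Psi> S (fsum (a # xs)) = LS scale \<Psi> S (delta a) + LS scale \<Psi> S (fsum xs)" .
  then show ?case using Cons by (simp add: LS_delta)
qed

end

lemma LS_supp: "module sz \<Longrightarrow> finite T \<Longrightarrow> {q. x q \<noteq> 0} \<subseteq> T
   \<Longrightarrow> LS sz \<Psi> T x = LS sz \<Psi> {q. x q \<noteq> 0} x"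
  using module.LS_mono[OF _ _ order_refl] by blast

lemma rel_master:
  fixes sz :: "'k::field \<Rightarrow> 'z::ab_group_add \<Rightarrow> 'z"
    and \<Psi> :: "'v::ab_group_add \<times> 'w::ab_group_add \<Rightarrow> 'z"
  assumes x: "x \<in> tens_rel sv sw" and m: "module sz"
    and R0: "0 \<in> R" and Radd: "\<And>a b. a \<in> R \<Longrightarrow> b \<in> R \<Longrightarrow> a + b \<in> R"
    and Rsc: "\<And>c a. a \<in> R \<Longrightarrow> sz c a \<in> R"
    and hL: "\<And>v v' w. \<Psi> (v + v', w) - \<Psi> (v, w) - \<Psi> (v', w) \<in> R"
    and hR: "\<And>v w w'. \<Psi> (v, w + w') - \<Psi> (v, w) - \<Psi> (v, w') \<in> R"
    and hsL: "\<And>c v w. \<Psi> (sv c v, w) - sz c (\<Psi> (v, w)) \<in> R"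
    and hsR: "\<And>c v w. \<Psi> (v, sw c w) - sz c (\<Psi> (v, w)) \<in> R"
  shows "finite {q. x q \<noteq> 0} \<and> LS sz \<Psi> {q. x q \<noteq> 0} x \<in> R"
  using x
proof induction
  case zero
  then show ?case using R0 by (simp add: LS_def)
next
  case (add x y)
  let ?S = "{q. x q \<noteq> 0} \<union> {q. y q \<noteq> 0}"
  have fS: "finite ?S" using add by auto
  have sub: "{q. x q + y q \<noteq> 0} \<subseteq> ?S" by auto
  have "LS sz \<Psi> {q. x q + y q \<noteq> 0} (\<lambda>q. x q + y q) = LS sz \<Psi> ?S (\<lambda>q. x q + y q)"
    using LS_supp[OF m fS sub, of \<Psi>] by simp
  also have "\<dots> = LS sz \<Psi> ?S x + LS sz \<Psi> ?S y" by (rule module.LS_add[OF m])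
  also have "\<dots> = LS sz \<Psi> {q. x q \<noteq> 0} x + LS sz \<Psi> {q. y q \<noteq> 0} y"
    using LS_supp[OF m fS, of x \<Psi>] LS_supp[OF m fS, of y \<Psi>] by auto
  finally show ?case using add Radd finite_subset[OF sub fS] by auto
next
  case (smult x c)
  let ?S = "{q. x q \<noteq> 0}"
  have fS: "finite ?S" using smult by auto
  have sub: "{q. c * x q \<noteq> 0} \<subseteq> ?S" by auto
  have "LS sz \<Psi> {q. c * x q \<noteq> 0} (\<lambda>q. c * x q) = LS sz \<Psi> ?S (\<lambda>q. c * x q)"
    using LS_supp[OF m fS sub, of \<Psi>] by simp
  also have "\<dots> = sz c (LS sz \<Psi> ?S x)" by (rule module.LS_smult[OF m])
  finally show ?case using smult Rsc finite_subset[OF sub fS] by auto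
next
  case (addL v v' w)
  let ?S = "{(v + v', w), (v, w), (v', w)}"
  let ?x = "\<lambda>p. (delta (v + v', w) p :: 'k) - delta (v, w) p - delta (v', w) p"
  have fS: "finite ?S" by simp
  have sub: "{q. ?x q \<noteq> 0} \<subseteq> ?S"
  proof
    fix q assume "q \<in> {q. ?x q \<noteq> 0}"
    then show "q \<in> ?S" by (cases "q \<in> ?S") (simp_all add: delta_def)
  qed
  have "LS sz \<Psi> {q. ?x q \<noteq> 0} ?x = LS sz \<Psi> ?S ?x"
    using LS_supp[OF m fS sub, of \<Psi>] by simp
  also have "\<dots> = \<Psi> (v + v', w) - \<Psi> (v, w) - \<Psi> (v', w)"
    by (simp add: module.LS_diff[OF m] module.LS_delta[OF m])
  finally show ?case using hL finite_subset[OF sub fS] by auto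
next
  case (addR v w w')
  let ?S = "{(v, w + w'), (v, w), (v, w')}"
  let ?x = "\<lambda>p. (delta (v, w + w') p :: 'k) - delta (v, w) p - delta (v, w') p"
  have fS: "finite ?S" by simp
  have sub: "{q. ?x q \<noteq> 0} \<subseteq> ?S"
  proof
    fix q assume "q \<in> {q. ?x q \<noteq> 0}"
    then show "q \<in> ?S" by (cases "q \<in> ?S") (simp_all add: delta_def)
  qed
  have "LS sz \<Psi> {q. ?x q \<noteq> 0} ?x = LS sz \<Psi> ?S ?x"
    using LS_supp[OF m fS sub, of \<Psi>] by simp
  also have "\<dots> = \<Psi> (v, w + w') - \<Psi> (v, w) - \<Psi> (v, w')"
    by (simp add: module.LS_diff[OF m] module.LS_delta[OF m])
  finally show ?case using hR finite_subset[OF sub fS] by auto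
next
  case (scL c v w)
  let ?S = "{(sv c v, w), (v, w)}"
  let ?x = "\<lambda>p. (delta (sv c v, w) p :: 'k) - c * delta (v, w) p"
  have fS: "finite ?S" by simp
  have sub: "{q. ?x q \<noteq> 0} \<subseteq> ?S"
  proof
    fix q assume "q \<in> {q. ?x q \<noteq> 0}"
    then show "q \<in> ?S" by (cases "q \<in> ?S") (simp_all add: delta_def)
  qed
  have "LS sz \<Psi> {q. ?x q \<noteq> 0} ?x = LS sz \<Psi> ?S ?x"
    using LS_supp[OF m fS sub, of \<Psi>] by simp
  also have "\<dots> = \<Psi> (sv c v, w) - sz c (\<Psi> (v, w))"
    by (simp add: module.LS_diff[OF m] module.LS_delta[OF m] module.LS_smult[OF m])
  finally show ?case using hsL finite_subset[OF sub fS] by auto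
next
  case (scR v c w)
  let ?S = "{(v, sw c w), (v, w)}"
  let ?x = "\<lambda>p. (delta (v, sw c w) p :: 'k) - c * delta (v, w) p"
  have fS: "finite ?S" by simp
  have sub: "{q. ?x q \<noteq> 0} \<subseteq> ?S"
  proof
    fix q assume "q \<in> {q. ?x q \<noteq> 0}"
    then show "q \<in> ?S" by (cases "q \<in> ?S") (simp_all add: delta_def)
  qed
  have "LS sz \<Psi> {q. ?x q \<noteq> 0} ?x = LS sz \<Psi> ?S ?x"
    using LS_supp[OF m fS sub, of \<Psi>] by simp
  also have "\<dots> = \<Psi> (v, sw c w) - sz c (\<Psi> (v, w))"
    by (simp add: module.LS_diff[OF m] module.LS_delta[OF m] module.LS_smult[OF m])
  finally show ?case using hsR finite_subset[OF sub fS] by auto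
qed


lemma tens_eq_bilin:
  fixes sz :: "'k::field \<Rightarrow> 'z::ab_group_add \<Rightarrow> 'z"
    and \<Psi> :: "'v::ab_group_add \<times> 'w::ab_group_add \<Rightarrow> 'z"
    and sv :: "'k \<Rightarrow> 'v \<Rightarrow> 'v" and sw :: "'k \<Rightarrow> 'w \<Rightarrow> 'w"
  assumes e: "tens_eq sv sw xs ys" and m: "module sz"
    and hL: "\<And>v v' w. \<Psi> (v + v', w) = \<Psi> (v, w) + \<Psi> (v', w)"
    and hR: "\<And>v w w'. \<Psi> (v, w + w') = \<Psi> (v, w) + \<Psi> (v, w')"
    and hsL: "\<And>c v w. \<Psi> (sv c v, w) = sz c (\<Psi> (v, w))"
    and hsR: "\<And>c v w. \<Psi> (v, sw c w) = sz c (\<Psi> (v, w))"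
  shows "sum_list (map \<Psi> xs) = sum_list (map \<Psi> ys)"
proof -
  let ?x = "\<lambda>p. fsum xs p - fsum ys p :: 'k"
  have "finite {q. ?x q \<noteq> 0} \<and> LS sz \<Psi> {q. ?x q \<noteq> 0} ?x \<in> {0}"
    by (rule rel_master[OF e[unfolded tens_eq_def] m])
      (auto simp: hL hR hsL hsR module.scale_zero_right[OF m])
  then have z: "LS sz \<Psi> {q. ?x q \<noteq> 0} ?x = 0" by simp
  let ?S = "set xs \<union> set ys"
  have sub: "{q. ?x q \<noteq> 0} \<subseteq> ?S"
  proof
    fix q assume "q \<in> {q. ?x q \<noteq> 0}"
    then show "q \<in> ?S" by (cases "q \<in> ?S") (simp_all add: fsum_def)
  qed
  have "LS sz \<Psi> ?S ?x = LS sz \<Psi> ?S (fsum xs) - LS sz \<Psi> ?S (fsum ys)"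
    by (rule module.LS_diff[OF m])
  also have "\<dots> = sum_list (map \<Psi> xs) - sum_list (map \<Psi> ys)"
  proof -
    have "LS sz \<Psi> ?S (fsum xs) = sum_list (map \<Psi> xs)" by (rule module.LS_fsum[OF m]) auto
    moreover have "LS sz \<Psi> ?S (fsum ys) = sum_list (map \<Psi> ys)" by (rule module.LS_fsum[OF m]) auto
    ultimately show ?thesis by simp
  qed
  finally show ?thesis using z LS_supp[OF m _ sub] by simp
qed

lemma module_fun: "module (\<lambda>(c::'k::field) (x::'p \<Rightarrow> 'k). \<lambda>p. c * x p)"
  by unfold_locales (auto simp: fun_eq_iff algebra_simps)

lemma fsum_concat: "sum_list (map (\<lambda>q. fsum (M q)) xs) = fsum (concat (map M xs))"
  by (induction xs) (auto simp: fun_eq_iff fsum_def)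

lemma tens_eq_concat:
  fixes M :: "'v::ab_group_add \<times> 'w::ab_group_add \<Rightarrow> ('v2::ab_group_add \<times> 'w2::ab_group_add) list"
    and sv :: "'k::field \<Rightarrow> 'v \<Rightarrow> 'v" and sw :: "'k \<Rightarrow> 'w \<Rightarrow> 'w"
    and sv2 :: "'k \<Rightarrow> 'v2 \<Rightarrow> 'v2" and sw2 :: "'k \<Rightarrow> 'w2 \<Rightarrow> 'w2"
  assumes e: "tens_eq sv sw xs ys"
    and hL: "\<And>v v' w. (\<lambda>p. fsum (M (v + v', w)) p - fsum (M (v, w)) p - fsum (M (v', w)) p) \<in> tens_rel sv2 sw2"
    and hR: "\<And>v w w'. (\<lambda>p. fsum (M (v, w + w')) p - fsum (M (v, w)) p - fsum (M (v, w')) p) \<in> tens_rel sv2 sw2"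
    and hsL: "\<And>c v w. (\<lambda>p. fsum (M (sv c v, w)) p - c * fsum (M (v, w)) p) \<in> tens_rel sv2 sw2"
    and hsR: "\<And>c v w. (\<lambda>p. fsum (M (v, sw c w)) p - c * fsum (M (v, w)) p) \<in> tens_rel sv2 sw2"
  shows "tens_eq sv2 sw2 (concat (map M xs)) (concat (map M ys))"
proof -
  let ?sz = "\<lambda>(c::'k) (x::'v2\<times>'w2 \<Rightarrow> 'k). \<lambda>p. c * x p"
  let ?\<Psi> = "\<lambda>q. fsum (M q) :: 'v2 \<times> 'w2 \<Rightarrow> 'k"
  have m: "module ?sz" by (rule module_fun)
  let ?x = "\<lambda>p. fsum xs p - fsum ys p :: 'k"
  have "finite {q. ?x q \<noteq> 0} \<and> LS ?sz ?\<Psi> {q. ?x q \<noteq> 0} ?x \<in> tens_rel sv2 sw2"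
  proof (rule rel_master[OF e[unfolded tens_eq_def] m])
    show "0 \<in> tens_rel sv2 sw2" using tens_rel.zero by (simp add: zero_fun_def)
    show "\<And>a b. a \<in> tens_rel sv2 sw2 \<Longrightarrow> b \<in> tens_rel sv2 sw2 \<Longrightarrow> a + b \<in> tens_rel sv2 sw2"
      unfolding plus_fun_def by (rule tens_rel.add)
    show "\<And>c a. a \<in> tens_rel sv2 sw2 \<Longrightarrow> ?sz c a \<in> tens_rel sv2 sw2"
      by (simp add: tens_rel.smult)
  qed (use hL hR hsL hsR in \<open>simp_all add: fun_diff_def\<close>)
  then have z: "LS ?sz ?\<Psi> {q. ?x q \<noteq> 0} ?x \<in> tens_rel sv2 sw2" by simp
  let ?S = "set xs \<union> set ys"
  have sub: "{q. ?x q \<noteq> 0} \<subseteq> ?S"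
  proof
    fix q assume "q \<in> {q. ?x q \<noteq> 0}"
    then show "q \<in> ?S" by (cases "q \<in> ?S") (simp_all add: fsum_def)
  qed
  have "LS ?sz ?\<Psi> ?S ?x = LS ?sz ?\<Psi> ?S (fsum xs) - LS ?sz ?\<Psi> ?S (fsum ys)"
    by (rule module.LS_diff[OF m])
  also have "\<dots> = sum_list (map ?\<Psi> xs) - sum_list (map ?\<Psi> ys)"
  proof -
    have "LS ?sz ?\<Psi> ?S (fsum xs) = sum_list (map ?\<Psi> xs)" by (rule module.LS_fsum[OF m]) auto
    moreover have "LS ?sz ?\<Psi> ?S (fsum ys) = sum_list (map ?\<Psi> ys)" by (rule module.LS_fsum[OF m]) auto
    ultimately show ?thesis by simp
  qed
  also have "\<dots> = fsum (concat (map M xs)) - fsum (concat (map M ys))"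
    by (simp add: fsum_concat)
  finally have "fsum (concat (map M xs)) - fsum (concat (map M ys)) \<in> tens_rel sv2 sw2"
    using z LS_supp[OF m _ sub] by simp
  then show ?thesis unfolding tens_eq_def fun_diff_def .
qed

lemma rel_mapL: "(\<lambda>p. fsum (map (\<lambda>r. (F1 r + F2 r, G r)) Y) p - fsum (map (\<lambda>r. (F1 r, G r)) Y) p
   - fsum (map (\<lambda>r. (F2 r, G r)) Y) p) \<in> tens_rel sv sw"
proof (induction Y)
  case Nil
  then show ?case by (rule rel_cong[OF tens_rel.zero]) simp
next
  case (Cons y Y)
  show ?case by (rule rel_cong[OF tens_rel.add[OF tens_rel.addL[of "F1 y" "F2 y" "G y"] Cons]])
    (simp add: fsum_Cons algebra_simps)
qed

lemma rel_mapR: "(\<lambda>p. fsum (map (\<lambda>r. (F r, G1 r + G2 r)) Y) p - fsum (map (\<lambda>r. (F r, G1 r)) Y) p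
   - fsum (map (\<lambda>r. (F r, G2 r)) Y) p) \<in> tens_rel sv sw"
proof (induction Y)
  case Nil
  then show ?case by (rule rel_cong[OF tens_rel.zero]) simp
next
  case (Cons y Y)
  show ?case by (rule rel_cong[OF tens_rel.add[OF tens_rel.addR[of "F y" "G1 y" "G2 y"] Cons]])
    (simp add: fsum_Cons algebra_simps)
qed

lemma rel_mapsL: "(\<lambda>p. fsum (map (\<lambda>r. (sv c (F r), G r)) Y) p - c * fsum (map (\<lambda>r. (F r, G r)) Y) p)
   \<in> tens_rel sv sw"
proof (induction Y)
  case Nil
  then show ?case by (rule rel_cong[OF tens_rel.zero]) simp
next
  case (Cons y Y)
  show ?case by (rule rel_cong[OF tens_rel.add[OF tens_rel.scL[of sv c "F y" "G y"] Cons]])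
    (simp add: fsum_Cons algebra_simps)
qed

lemma rel_mapsR: "(\<lambda>p. fsum (map (\<lambda>r. (F r, sw c (G r))) Y) p - c * fsum (map (\<lambda>r. (F r, G r)) Y) p)
   \<in> tens_rel sv sw"
proof (induction Y)
  case Nil
  then show ?case by (rule rel_cong[OF tens_rel.zero]) simp
next
  case (Cons y Y)
  show ?case by (rule rel_cong[OF tens_rel.add[OF tens_rel.scR[of "F y" sw c "G y"] Cons]])
    (simp add: fsum_Cons algebra_simps)
qed

lemma congX:
  fixes \<phi> :: "'v1::ab_group_add \<Rightarrow> 'v2 \<Rightarrow> 'v3::ab_group_add"
    and \<psi> :: "'w1::ab_group_add \<Rightarrow> 'w2 \<Rightarrow> 'w3::ab_group_add"
    and s1 :: "'k::field \<Rightarrow> 'v1 \<Rightarrow> 'v1" and s2 :: "'k \<Rightarrow> 'w1 \<Rightarrow> 'w1"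
    and s3 :: "'k \<Rightarrow> 'v3 \<Rightarrow> 'v3" and s4 :: "'k \<Rightarrow> 'w3 \<Rightarrow> 'w3"
  assumes e: "tens_eq s1 s2 X X'"
    and pa: "\<And>a a' c. \<phi> (a + a') c = \<phi> a c + \<phi> a' c"
    and ps: "\<And>k a c. \<phi> (s1 k a) c = s3 k (\<phi> a c)"
    and qa: "\<And>b b' d. \<psi> (b + b') d = \<psi> b d + \<psi> b' d"
    and qs: "\<And>k b d. \<psi> (s2 k b) d = s4 k (\<psi> b d)"
  shows "tens_eq s3 s4 (concat (map (\<lambda>(a, b). map (\<lambda>(c, d). (\<phi> a c, \<psi> b d)) Y) X))
                       (concat (map (\<lambda>(a, b). map (\<lambda>(c, d). (\<phi> a c, \<psi> b d)) Y) X'))"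
  apply (rule tens_eq_concat[OF e])
  subgoal for v v' w
    using rel_mapL[of "\<lambda>r. \<phi> v (fst r)" "\<lambda>r. \<phi> v' (fst r)" "\<lambda>r. \<psi> w (snd r)" Y s3 s4]
    by (simp add: split_def pa)
  subgoal for v w w'
    using rel_mapR[of "\<lambda>r. \<phi> v (fst r)" "\<lambda>r. \<psi> w (snd r)" "\<lambda>r. \<psi> w' (snd r)" Y s3 s4]
    by (simp add: split_def qa)
  subgoal for c v w
    using rel_mapsL[of s3 c "\<lambda>r. \<phi> v (fst r)" "\<lambda>r. \<psi> w (snd r)" Y s4]
    by (simp add: split_def ps)
  subgoal for c v w
    using rel_mapsR[of "\<lambda>r. \<phi> v (fst r)" s4 c "\<lambda>r. \<psi> w (snd r)" Y s3]
    by (simp add: split_def qs)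
  done

lemma concat_single: "concat (map (\<lambda>r. [f r]) Y) = map f Y"
  by (induction Y) auto

lemma congY:
  fixes \<phi> :: "'v1::ab_group_add \<Rightarrow> 'v3::ab_group_add"
    and \<psi> :: "'w1::ab_group_add \<Rightarrow> 'w3::ab_group_add"
    and s1 :: "'k::field \<Rightarrow> 'v1 \<Rightarrow> 'v1" and s2 :: "'k \<Rightarrow> 'w1 \<Rightarrow> 'w1"
    and s3 :: "'k \<Rightarrow> 'v3 \<Rightarrow> 'v3" and s4 :: "'k \<Rightarrow> 'w3 \<Rightarrow> 'w3"
  assumes e: "tens_eq s1 s2 Y Y'"
    and pa: "\<And>a a'. \<phi> (a + a') = \<phi> a + \<phi> a'"
    and ps: "\<And>k a. \<phi> (s1 k a) = s3 k (\<phi> a)"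
    and qa: "\<And>b b'. \<psi> (b + b') = \<psi> b + \<psi> b'"
    and qs: "\<And>k b. \<psi> (s2 k b) = s4 k (\<psi> b)"
  shows "tens_eq s3 s4 (map (\<lambda>(c, d). (\<phi> c, \<psi> d)) Y) (map (\<lambda>(c, d). (\<phi> c, \<psi> d)) Y')"
proof -
  have "tens_eq s3 s4 (concat (map (\<lambda>(c, d). [(\<phi> c, \<psi> d)]) Y)) (concat (map (\<lambda>(c, d). [(\<phi> c, \<psi> d)]) Y'))"
    apply (rule tens_eq_concat[OF e])
    subgoal for v v' w
      by (rule rel_cong[OF tens_rel.addL[of "\<phi> v" "\<phi> v'" "\<psi> w"]]) (simp add: fsum_single pa)
    subgoal for v w w'
      by (rule rel_cong[OF tens_rel.addR[of "\<phi> v" "\<psi> w" "\<psi> w'"]]) (simp add: fsum_single qa)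
    subgoal for c v w
      by (rule rel_cong[OF tens_rel.scL[of s3 c "\<phi> v" "\<psi> w"]]) (simp add: fsum_single ps)
    subgoal for c v w
      by (rule rel_cong[OF tens_rel.scR[of "\<phi> v" s4 c "\<psi> w"]]) (simp add: fsum_single qs)
    done
  then show ?thesis using concat_single[of "\<lambda>(c, d). (\<phi> c, \<psi> d)"] by (simp add: split_def)
qed

lemma tens_eq_trans: "tens_eq sv sw a b \<Longrightarrow> tens_eq sv sw b c \<Longrightarrow> tens_eq sv sw a c"
  unfolding tens_eq_def
proof -
  assume a: "(\<lambda>p. fsum a p - fsum b p) \<in> tens_rel sv sw" "(\<lambda>p. fsum b p - fsum c p) \<in> tens_rel sv sw"
  show "(\<lambda>p. fsum a p - fsum c p) \<in> tens_rel sv sw"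
    by (rule rel_cong[OF tens_rel.add[OF a]]) simp
qed

lemma tens_eq_sym: "tens_eq sv sw a b \<Longrightarrow> tens_eq sv sw b a"
  unfolding tens_eq_def
proof -
  assume a: "(\<lambda>p. fsum a p - fsum b p) \<in> tens_rel sv sw"
  show "(\<lambda>p. fsum b p - fsum a p) \<in> tens_rel sv sw"
    by (rule rel_cong[OF tens_rel.smult[OF a, where c="-1"]]) simp
qed

lemma tens_eq_refl: "tens_eq sv sw a a"
  unfolding tens_eq_def by (rule rel_cong[OF tens_rel.zero]) auto

lemma HA_vs: "hopf_algebra sH \<Delta> \<epsilon> S \<Longrightarrow> vector_space sH"
  unfolding hopf_algebra_def by (elim conjE)
lemma HA_d1: "hopf_algebra sH \<Delta> \<epsilon> S \<Longrightarrow> tens_eq sH sH (\<Delta> 1) [(1, 1)]"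
  unfolding hopf_algebra_def by (elim conjE)
lemma HA_e1: "hopf_algebra sH \<Delta> \<epsilon> S \<Longrightarrow> \<epsilon> 1 = 1"
  unfolding hopf_algebra_def by (elim conjE)
lemma HA_Sl: "hopf_algebra sH \<Delta> \<epsilon> S \<Longrightarrow> linear_map sH sH S"
  unfolding hopf_algebra_def by (elim conjE)
lemma HA_ml: "hopf_algebra sH \<Delta> \<epsilon> S \<Longrightarrow> sH c (a * b) = sH c a * b"
  unfolding hopf_algebra_def by (elim conjE, (drule spec)+, (elim conjE)?)
lemma HA_mr: "hopf_algebra sH \<Delta> \<epsilon> S \<Longrightarrow> sH c (a * b) = a * sH c b"
  unfolding hopf_algebra_def by (elim conjE, (drule spec)+, (elim conjE)?)
lemma HA_dm: "hopf_algebra sH \<Delta> \<epsilon> S \<Longrightarrow> tens_eq sH sH (\<Delta> (a * b))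
        (concat (map (\<lambda>(a1, b1). map (\<lambda>(c, d). (a1 * c, b1 * d)) (\<Delta> b)) (\<Delta> a)))"
  unfolding hopf_algebra_def by (elim conjE, (drule spec)+)
lemma HA_em: "hopf_algebra sH \<Delta> \<epsilon> S \<Longrightarrow> \<epsilon> (a * b) = \<epsilon> a * \<epsilon> b"
  unfolding hopf_algebra_def by (elim conjE, (drule spec)+)
lemma HA_a1: "hopf_algebra sH \<Delta> \<epsilon> S \<Longrightarrow> sum_list (map (\<lambda>(x, y). S x * y) (\<Delta> h)) = sH (\<epsilon> h) 1"
  unfolding hopf_algebra_def by (elim conjE, (drule spec)+)
lemma HA_a2: "hopf_algebra sH \<Delta> \<epsilon> S \<Longrightarrow> sum_list (map (\<lambda>(x, y). x * S y) (\<Delta> h)) = sH (\<epsilon> h) 1"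
  unfolding hopf_algebra_def by (elim conjE, (drule spec)+)

lemma gl_mult:
  fixes sH :: "'k::field_char_0 \<Rightarrow> 'h::ring_1 \<Rightarrow> 'h"
  assumes H: "hopf_algebra sH \<Delta> \<epsilon> S" and gx: "group_like sH \<Delta> \<epsilon> x" and gy: "group_like sH \<Delta> \<epsilon> y"
  shows "group_like sH \<Delta> \<epsilon> (x * y)"
proof -
  note ml = HA_ml[OF H] and mr = HA_mr[OF H] and dm = HA_dm[OF H]
    and em = HA_em[OF H]
  have e1: "tens_eq sH sH (\<Delta> (x * y))
        (concat (map (\<lambda>(a1, b1). map (\<lambda>(c, d). (a1 * c, b1 * d)) (\<Delta> y)) (\<Delta> x)))"
    by (rule dm)
  have e2: "tens_eq sH sH (concat (map (\<lambda>(a1, b1). map (\<lambda>(c, d). (a1 * c, b1 * d)) (\<Delta> y)) (\<Delta> x)))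
     (concat (map (\<lambda>(a1, b1). map (\<lambda>(c, d). (a1 * c, b1 * d)) (\<Delta> y)) [(x, x)]))"
    by (rule congX[where \<phi>="(*)" and \<psi>="(*)"]) (use gx in \<open>auto simp: group_like_def distrib_right ml\<close>)
  have e4: "tens_eq sH sH (map (\<lambda>(c, d). (x * c, x * d)) (\<Delta> y)) (map (\<lambda>(c, d). (x * c, x * d)) [(y, y)])"
    by (rule congY) (use gy in \<open>auto simp: group_like_def distrib_left mr\<close>)
  have "tens_eq sH sH (\<Delta> (x * y)) [(x * y, x * y)]"
    using tens_eq_trans[OF tens_eq_trans[OF e1 e2]] e4 by simp
  then show ?thesis using gx gy em by (simp add: group_like_def)
qed

lemma gl_antipode:
  fixes sH :: "'k::field_char_0 \<Rightarrow> 'h::ring_1 \<Rightarrow> 'h"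
  assumes H: "hopf_algebra sH \<Delta> \<epsilon> S" and g: "group_like sH \<Delta> \<epsilon> g"
  shows "S g * g = 1 \<and> g * S g = 1"
proof -
  note ml = HA_ml[OF H] and mr = HA_mr[OF H] and vs = HA_vs[OF H]
    and Sl = HA_Sl[OF H] and a1 = HA_a1[OF H] and a2 = HA_a2[OF H]
  have m: "module sH" using vs by (simp add: module_iff_vector_space)
  have Sadd: "\<And>x y. S (x + y) = S x + S y" and Ssc: "\<And>c x. S (sH c x) = sH c (S x)"
    using Sl unfolding linear_map_def by auto
  have e: "tens_eq sH sH (\<Delta> g) [(g, g)]" and eg: "\<epsilon> g = 1" using g by (auto simp: group_like_def)
  have "sum_list (map (\<lambda>(x, y). S x * y) (\<Delta> g)) = sum_list (map (\<lambda>(x, y). S x * y) [(g, g)])"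
    by (rule tens_eq_bilin[OF e m]) (auto simp: Sadd Ssc distrib_left distrib_right ml mr[symmetric])
  moreover have "sum_list (map (\<lambda>(x, y). x * S y) (\<Delta> g)) = sum_list (map (\<lambda>(x, y). x * S y) [(g, g)])"
    by (rule tens_eq_bilin[OF e m]) (auto simp: Sadd Ssc distrib_left distrib_right ml mr[symmetric])
  ultimately show ?thesis using a1[of g] a2[of g] eg module.scale_one[OF m] by simp
qed

lemma gl_inv:
  fixes sH :: "'k::field_char_0 \<Rightarrow> 'h::ring_1 \<Rightarrow> 'h"
  assumes H: "hopf_algebra sH \<Delta> \<epsilon> S" and g: "group_like sH \<Delta> \<epsilon> g"
  shows "group_like sH \<Delta> \<epsilon> (S g)"
proof -
  define h where "h = S g"
  have hg: "h * g = 1" and gh: "g * h = 1" using gl_antipode[OF H g] by (auto simp: h_def)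
  note ml = HA_ml[OF H] and mr = HA_mr[OF H] and dm = HA_dm[OF H]
    and em = HA_em[OF H] and d1 = HA_d1[OF H] and e1 = HA_e1[OF H]
  have e: "tens_eq sH sH (\<Delta> g) [(g, g)]" and eg: "\<epsilon> g = 1" using g by (auto simp: group_like_def)
  have "\<epsilon> h = 1" using em[of h g] hg eg e1 by simp
  have x1: "tens_eq sH sH (\<Delta> (g * h))
        (concat (map (\<lambda>(a1, b1). map (\<lambda>(c, d). (a1 * c, b1 * d)) (\<Delta> h)) (\<Delta> g)))"
    by (rule dm)
  have x2: "tens_eq sH sH (concat (map (\<lambda>(a1, b1). map (\<lambda>(c, d). (a1 * c, b1 * d)) (\<Delta> h)) (\<Delta> g)))
     (concat (map (\<lambda>(a1, b1). map (\<lambda>(c, d). (a1 * c, b1 * d)) (\<Delta> h)) [(g, g)]))"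
    by (rule congX[where \<phi>="(*)" and \<psi>="(*)"]) (use e in \<open>auto simp: distrib_right ml\<close>)
  have x3: "tens_eq sH sH (map (\<lambda>(c, d). (g * c, g * d)) (\<Delta> h)) [(1, 1)]"
    using tens_eq_trans[OF tens_eq_sym[OF tens_eq_trans[OF x1 x2]]] d1 gh by simp
  have x4: "tens_eq sH sH (map (\<lambda>(c, d). (h * c, h * d)) (map (\<lambda>(c, d). (g * c, g * d)) (\<Delta> h)))
      (map (\<lambda>(c, d). (h * c, h * d)) [(1, 1)])"
    by (rule congY[OF x3]) (auto simp: distrib_left mr)
  have "map (\<lambda>(c, d). (h * c, h * d)) (map (\<lambda>(c, d). (g * c, g * d)) L) = L" for L
    by (induction L) (auto simp: mult.assoc[symmetric] hg)
  then have "tens_eq sH sH (\<Delta> h) [(h, h)]" using x4 by simp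
  then show ?thesis using \<open>\<epsilon> h = 1\<close> by (simp add: group_like_def h_def)
qed

lemma LM_H: "hopf_LM sH \<Delta>0 \<epsilon> S0 sA lact ract f \<Delta>1 S1 \<Longrightarrow> hopf_algebra sH \<Delta>0 \<epsilon> S0"
  unfolding hopf_LM_def by (elim conjE)

lemma LM_vA: "hopf_LM sH \<Delta>0 \<epsilon> S0 sA lact ract f \<Delta>1 S1 \<Longrightarrow> vector_space sA"
  unfolding hopf_LM_def by (elim conjE)

lemma LM_la1: "hopf_LM sH \<Delta>0 \<epsilon> S0 sA lact ract f \<Delta>1 S1 \<Longrightarrow> lact (x + y) a = lact x a + lact y a"
  unfolding hopf_LM_def by (elim conjE, (drule spec)+, (elim conjE)?)

lemma LM_la2: "hopf_LM sH \<Delta>0 \<epsilon> S0 sA lact ract f \<Delta>1 S1 \<Longrightarrow> lact x (a + b) = lact x a + lact x b"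
  unfolding hopf_LM_def by (elim conjE, (drule spec)+, (elim conjE)?)

lemma LM_la3: "hopf_LM sH \<Delta>0 \<epsilon> S0 sA lact ract f \<Delta>1 S1 \<Longrightarrow> lact (sH c x) a = sA c (lact x a)"
  unfolding hopf_LM_def by (elim conjE, (drule spec)+, (elim conjE)?)

lemma LM_la4: "hopf_LM sH \<Delta>0 \<epsilon> S0 sA lact ract f \<Delta>1 S1 \<Longrightarrow> lact x (sA c a) = sA c (lact x a)"
  unfolding hopf_LM_def by (elim conjE, (drule spec)+, (elim conjE)?)

lemma LM_la5: "hopf_LM sH \<Delta>0 \<epsilon> S0 sA lact ract f \<Delta>1 S1 \<Longrightarrow> lact (x * y) a = lact x (lact y a)"
  unfolding hopf_LM_def by (elim conjE, (drule spec)+, (elim conjE)?)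

lemma LM_la6: "hopf_LM sH \<Delta>0 \<epsilon> S0 sA lact ract f \<Delta>1 S1 \<Longrightarrow> lact 1 a = a"
  unfolding hopf_LM_def by (elim conjE, (drule spec)+, (elim conjE)?)

lemma LM_ra1: "hopf_LM sH \<Delta>0 \<epsilon> S0 sA lact ract f \<Delta>1 S1 \<Longrightarrow> ract a (x + y) = ract a x + ract a y"
  unfolding hopf_LM_def by (elim conjE, (drule spec)+, (elim conjE)?)

lemma LM_ra2: "hopf_LM sH \<Delta>0 \<epsilon> S0 sA lact ract f \<Delta>1 S1 \<Longrightarrow> ract (a + b) x = ract a x + ract b x"
  unfolding hopf_LM_def by (elim conjE, (drule spec)+, (elim conjE)?)

lemma LM_ra3: "hopf_LM sH \<Delta>0 \<epsilon> S0 sA lact ract f \<Delta>1 S1 \<Longrightarrow> ract a (sH c x) = sA c (ract a x)"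
  unfolding hopf_LM_def by (elim conjE, (drule spec)+, (elim conjE)?)

lemma LM_ra4: "hopf_LM sH \<Delta>0 \<epsilon> S0 sA lact ract f \<Delta>1 S1 \<Longrightarrow> ract (sA c a) x = sA c (ract a x)"
  unfolding hopf_LM_def by (elim conjE, (drule spec)+, (elim conjE)?)

lemma LM_ra5: "hopf_LM sH \<Delta>0 \<epsilon> S0 sA lact ract f \<Delta>1 S1 \<Longrightarrow> ract a (x * y) = ract (ract a x) y"
  unfolding hopf_LM_def by (elim conjE, (drule spec)+, (elim conjE)?)

lemma LM_ra6: "hopf_LM sH \<Delta>0 \<epsilon> S0 sA lact ract f \<Delta>1 S1 \<Longrightarrow> ract a 1 = a"
  unfolding hopf_LM_def by (elim conjE, (drule spec)+, (elim conjE)?)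

lemma LM_lr: "hopf_LM sH \<Delta>0 \<epsilon> S0 sA lact ract f \<Delta>1 S1 \<Longrightarrow> lact x (ract a y) = ract (lact x a) y"
  unfolding hopf_LM_def by (elim conjE, (drule spec)+, (elim conjE)?)

lemma LM_dl: "hopf_LM sH \<Delta>0 \<epsilon> S0 sA lact ract f \<Delta>1 S1 \<Longrightarrow> dsum_eq sH sA (\<Delta>1 (lact h a)) (dsum_lact \<Delta>0 lact h (\<Delta>1 a))"
  unfolding hopf_LM_def by (elim conjE, (drule spec)+, (elim conjE)?)

lemma LM_dr: "hopf_LM sH \<Delta>0 \<epsilon> S0 sA lact ract f \<Delta>1 S1 \<Longrightarrow> dsum_eq sH sA (\<Delta>1 (ract a h)) (dsum_ract \<Delta>0 ract (\<Delta>1 a) h)"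
  unfolding hopf_LM_def by (elim conjE, (drule spec)+, (elim conjE)?)

lemmas LM_facts = LM_H LM_vA LM_la1 LM_la2 LM_la3 LM_la4 LM_la5 LM_la6
  LM_ra1 LM_ra2 LM_ra3 LM_ra4 LM_ra5 LM_ra6 LM_lr LM_dl LM_dr

lemma LM_vH: "hopf_LM sH \<Delta>0 \<epsilon> S0 sA lact ract f \<Delta>1 S1 \<Longrightarrow> vector_space sH"
  using LM_H HA_vs by blast

lemma LM_ml: "hopf_LM sH \<Delta>0 \<epsilon> S0 sA lact ract f \<Delta>1 S1 \<Longrightarrow> sH c (a * b) = sH c a * b"
  using LM_H HA_ml by blast

lemma LM_mr: "hopf_LM sH \<Delta>0 \<epsilon> S0 sA lact ract f \<Delta>1 S1 \<Longrightarrow> sH c (a * b) = a * sH c b"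
  using LM_H HA_mr by blast

lemma edge_unique:
  fixes sH :: "'k::field_char_0 \<Rightarrow> 'h::ring_1 \<Rightarrow> 'h" and sA :: "'k \<Rightarrow> 'a::ab_group_add \<Rightarrow> 'a"
  assumes LM: "hopf_LM sH \<Delta>0 \<epsilon> S0 sA lact ract f \<Delta>1 S1" and a0: "a \<noteq> 0"
    and e1: "edge_like_st sH \<Delta>0 \<epsilon> sA \<Delta>1 a s t" and e2: "edge_like_st sH \<Delta>0 \<epsilon> sA \<Delta>1 a s' t'"
  shows "s = s' \<and> t = t'"
proof -
  note F = LM_facts[OF LM] LM_vH[OF LM] LM_ml[OF LM] LM_mr[OF LM]
  note vA = LM_vA[OF LM] and vH = LM_vH[OF LM]
  have mH: "module sH" using vH by (simp add: module_iff_vector_space)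
  have vk: "vector_space ((*) :: 'k \<Rightarrow> 'k \<Rightarrow> 'k)" by unfold_locales (auto simp: algebra_simps)
  interpret P: vector_space_pair sA "(*) :: 'k \<Rightarrow> 'k \<Rightarrow> 'k" using vA vk by (simp add: vector_space_pair_def)
  have ind: "P.vs1.independent {a}"
    using P.vs1.independent_insertI[of a "{}"] a0 by simp
  obtain \<phi> where lin: "Vector_Spaces.linear sA ((*) :: 'k \<Rightarrow> 'k \<Rightarrow> 'k) \<phi>" and pa: "\<phi> a = 1"
    using P.linear_independent_extend[OF ind, of "\<lambda>_. 1"] by auto
  have mh: "module_hom sA ((*) :: 'k \<Rightarrow> 'k \<Rightarrow> 'k) \<phi>" using lin by (simp add: module_hom_iff_linear)
  have padd: "\<And>x y. \<phi> (x + y) = \<phi> x + \<phi> y" using module_hom.add[OF mh] .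
  have psc: "\<And>c x. \<phi> (sA c x) = c * \<phi> x" using module_hom.scale[OF mh] .
  note sc = module.scale_left_distrib[OF mH] module.scale_right_distrib[OF mH]
    module.scale_scale[OF mH] module.scale_left_commute[OF mH]
  have f1: "tens_eq sA sH (fst (\<Delta>1 a)) [(a, t)]" "tens_eq sA sH (fst (\<Delta>1 a)) [(a, t')]"
    and f2: "tens_eq sH sA (snd (\<Delta>1 a)) [(s, a)]" "tens_eq sH sA (snd (\<Delta>1 a)) [(s', a)]"
    using e1 e2 by (auto simp: edge_like_st_def dsum_eq_def)
  have "sum_list (map (\<lambda>(b, y). sH (\<phi> b) y) (fst (\<Delta>1 a))) = sum_list (map (\<lambda>(b, y). sH (\<phi> b) y) [(a, t)])"
    by (rule tens_eq_bilin[OF f1(1) mH]) (auto simp: padd psc sc mult.commute)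
  moreover have "sum_list (map (\<lambda>(b, y). sH (\<phi> b) y) (fst (\<Delta>1 a))) = sum_list (map (\<lambda>(b, y). sH (\<phi> b) y) [(a, t')])"
    by (rule tens_eq_bilin[OF f1(2) mH]) (auto simp: padd psc sc mult.commute)
  moreover have "sum_list (map (\<lambda>(y, b). sH (\<phi> b) y) (snd (\<Delta>1 a))) = sum_list (map (\<lambda>(y, b). sH (\<phi> b) y) [(s, a)])"
    by (rule tens_eq_bilin[OF f2(1) mH]) (auto simp: padd psc sc mult.commute)
  moreover have "sum_list (map (\<lambda>(y, b). sH (\<phi> b) y) (snd (\<Delta>1 a))) = sum_list (map (\<lambda>(y, b). sH (\<phi> b) y) [(s', a)])"
    by (rule tens_eq_bilin[OF f2(2) mH]) (auto simp: padd psc sc mult.commute)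
  ultimately show ?thesis using pa module.scale_one[OF mH] by simp
qed

lemma edge_lact:
  fixes sH :: "'k::field_char_0 \<Rightarrow> 'h::ring_1 \<Rightarrow> 'h" and sA :: "'k \<Rightarrow> 'a::ab_group_add \<Rightarrow> 'a"
  assumes LM: "hopf_LM sH \<Delta>0 \<epsilon> S0 sA lact ract f \<Delta>1 S1" and g: "group_like sH \<Delta>0 \<epsilon> g"
    and e: "edge_like_st sH \<Delta>0 \<epsilon> sA \<Delta>1 a s t"
  shows "edge_like_st sH \<Delta>0 \<epsilon> sA \<Delta>1 (lact g a) (g * s) (g * t)"
proof -
  note F = LM_facts[OF LM] LM_vH[OF LM] LM_ml[OF LM] LM_mr[OF LM]
  note H = LM_H[OF LM]
  have gs: "group_like sH \<Delta>0 \<epsilon> s" and gt: "group_like sH \<Delta>0 \<epsilon> t"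
    and f1: "tens_eq sA sH (fst (\<Delta>1 a)) [(a, t)]" and f2: "tens_eq sH sA (snd (\<Delta>1 a)) [(s, a)]"
    using e by (auto simp: edge_like_st_def dsum_eq_def)
  have dg: "tens_eq sH sH (\<Delta>0 g) [(g, g)]" using g by (simp add: group_like_def)
  note d = LM_dl[OF LM, of g a]
  have x1: "tens_eq sA sH (fst (\<Delta>1 (lact g a)))
      (concat (map (\<lambda>(h1, h2). map (\<lambda>(a, y). (lact h1 a, h2 * y)) (fst (\<Delta>1 a))) (\<Delta>0 g)))"
    using d by (simp add: dsum_eq_def dsum_lact_def)
  have x2: "tens_eq sA sH
      (concat (map (\<lambda>(h1, h2). map (\<lambda>(a, y). (lact h1 a, h2 * y)) (fst (\<Delta>1 a))) (\<Delta>0 g)))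
      (concat (map (\<lambda>(h1, h2). map (\<lambda>(a, y). (lact h1 a, h2 * y)) (fst (\<Delta>1 a))) [(g, g)]))"
    by (rule congX[OF dg, where \<phi>=lact and \<psi>="(*)"]) (use F in \<open>auto simp: distrib_right\<close>)
  have x3: "tens_eq sA sH (map (\<lambda>(b, y). (lact g b, g * y)) (fst (\<Delta>1 a)))
      (map (\<lambda>(b, y). (lact g b, g * y)) [(a, t)])"
    by (rule congY[OF f1]) (use F in \<open>auto simp: distrib_left\<close>)
  have y1: "tens_eq sH sA (snd (\<Delta>1 (lact g a)))
      (concat (map (\<lambda>(h1, h2). map (\<lambda>(y, a). (h1 * y, lact h2 a)) (snd (\<Delta>1 a))) (\<Delta>0 g)))"
    using d by (simp add: dsum_eq_def dsum_lact_def)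
  have y2: "tens_eq sH sA
      (concat (map (\<lambda>(h1, h2). map (\<lambda>(y, a). (h1 * y, lact h2 a)) (snd (\<Delta>1 a))) (\<Delta>0 g)))
      (concat (map (\<lambda>(h1, h2). map (\<lambda>(y, a). (h1 * y, lact h2 a)) (snd (\<Delta>1 a))) [(g, g)]))"
    by (rule congX[OF dg, where \<phi>="(*)" and \<psi>=lact]) (use F in \<open>auto simp: distrib_right\<close>)
  have y3: "tens_eq sH sA (map (\<lambda>(y, b). (g * y, lact g b)) (snd (\<Delta>1 a)))
      (map (\<lambda>(y, b). (g * y, lact g b)) [(s, a)])"
    by (rule congY[OF f2]) (use F in \<open>auto simp: distrib_left\<close>)
  have "tens_eq sA sH (fst (\<Delta>1 (lact g a))) [(lact g a, g * t)]"
    using tens_eq_trans[OF tens_eq_trans[OF x1 x2]] x3 by simp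
  moreover have "tens_eq sH sA (snd (\<Delta>1 (lact g a))) [(g * s, lact g a)]"
    using tens_eq_trans[OF tens_eq_trans[OF y1 y2]] y3 by simp
  ultimately show ?thesis using gl_mult[OF H g gs] gl_mult[OF H g gt]
    by (simp add: edge_like_st_def dsum_eq_def)
qed

lemma edge_ract:
  fixes sH :: "'k::field_char_0 \<Rightarrow> 'h::ring_1 \<Rightarrow> 'h" and sA :: "'k \<Rightarrow> 'a::ab_group_add \<Rightarrow> 'a"
  assumes LM: "hopf_LM sH \<Delta>0 \<epsilon> S0 sA lact ract f \<Delta>1 S1" and g: "group_like sH \<Delta>0 \<epsilon> g"
    and e: "edge_like_st sH \<Delta>0 \<epsilon> sA \<Delta>1 a s t"
  shows "edge_like_st sH \<Delta>0 \<epsilon> sA \<Delta>1 (ract a g) (s * g) (t * g)"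
proof -
  note F = LM_facts[OF LM] LM_vH[OF LM] LM_ml[OF LM] LM_mr[OF LM]
  note H = LM_H[OF LM]
  have gs: "group_like sH \<Delta>0 \<epsilon> s" and gt: "group_like sH \<Delta>0 \<epsilon> t"
    and f1: "tens_eq sA sH (fst (\<Delta>1 a)) [(a, t)]" and f2: "tens_eq sH sA (snd (\<Delta>1 a)) [(s, a)]"
    using e by (auto simp: edge_like_st_def dsum_eq_def)
  have dg: "tens_eq sH sH (\<Delta>0 g) [(g, g)]" using g by (simp add: group_like_def)
  note d = LM_dr[OF LM, of a g]
  have x1: "tens_eq sA sH (fst (\<Delta>1 (ract a g)))
      (concat (map (\<lambda>(h1, h2). map (\<lambda>(a, y). (ract a h1, y * h2)) (fst (\<Delta>1 a))) (\<Delta>0 g)))"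
    using d by (simp add: dsum_eq_def dsum_ract_def)
  have x2: "tens_eq sA sH
      (concat (map (\<lambda>(h1, h2). map (\<lambda>(a, y). (ract a h1, y * h2)) (fst (\<Delta>1 a))) (\<Delta>0 g)))
      (concat (map (\<lambda>(h1, h2). map (\<lambda>(a, y). (ract a h1, y * h2)) (fst (\<Delta>1 a))) [(g, g)]))"
    by (rule congX[OF dg, where \<phi>="\<lambda>h1 a. ract a h1" and \<psi>="\<lambda>h2 y. y * h2"])
      (use F in \<open>auto simp: distrib_left\<close>)
  have x3: "tens_eq sA sH (map (\<lambda>(b, y). (ract b g, y * g)) (fst (\<Delta>1 a)))
      (map (\<lambda>(b, y). (ract b g, y * g)) [(a, t)])"
    by (rule congY[OF f1]) (use F in \<open>auto simp: distrib_right\<close>)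
  have y1: "tens_eq sH sA (snd (\<Delta>1 (ract a g)))
      (concat (map (\<lambda>(h1, h2). map (\<lambda>(y, a). (y * h1, ract a h2)) (snd (\<Delta>1 a))) (\<Delta>0 g)))"
    using d by (simp add: dsum_eq_def dsum_ract_def)
  have y2: "tens_eq sH sA
      (concat (map (\<lambda>(h1, h2). map (\<lambda>(y, a). (y * h1, ract a h2)) (snd (\<Delta>1 a))) (\<Delta>0 g)))
      (concat (map (\<lambda>(h1, h2). map (\<lambda>(y, a). (y * h1, ract a h2)) (snd (\<Delta>1 a))) [(g, g)]))"
    by (rule congX[OF dg, where \<phi>="\<lambda>h1 y. y * h1" and \<psi>="\<lambda>h2 a. ract a h2"])
      (use F in \<open>auto simp: distrib_left\<close>)
  have y3: "tens_eq sH sA (map (\<lambda>(y, b). (y * g, ract b g)) (snd (\<Delta>1 a)))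
      (map (\<lambda>(y, b). (y * g, ract b g)) [(s, a)])"
    by (rule congY[OF f2]) (use F in \<open>auto simp: distrib_right\<close>)
  have "tens_eq sA sH (fst (\<Delta>1 (ract a g))) [(ract a g, t * g)]"
    using tens_eq_trans[OF tens_eq_trans[OF x1 x2]] x3 by simp
  moreover have "tens_eq sH sA (snd (\<Delta>1 (ract a g))) [(s * g, ract a g)]"
    using tens_eq_trans[OF tens_eq_trans[OF y1 y2]] y3 by simp
  ultimately show ?thesis using gl_mult[OF H gs g] gl_mult[OF H gt g]
    by (simp add: edge_like_st_def dsum_eq_def)
qed

theorem mainTheorem12:
  fixes sH :: "'k::field_char_0 \<Rightarrow> 'h::ring_1 \<Rightarrow> 'h"
    and \<Delta>0 :: "'h \<Rightarrow> ('h \<times> 'h) list" and \<epsilon> :: "'h \<Rightarrow> 'k" and S0 :: "'h \<Rightarrow> 'h"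
    and sA :: "'k \<Rightarrow> 'a::ab_group_add \<Rightarrow> 'a"
    and lact :: "'h \<Rightarrow> 'a \<Rightarrow> 'a" and ract :: "'a \<Rightarrow> 'h \<Rightarrow> 'a"
    and f :: "'a \<Rightarrow> 'h" and \<Delta>1 :: "'a \<Rightarrow> ('a \<times> 'h) list \<times> ('h \<times> 'a) list"
    and S1 :: "'a \<Rightarrow> 'a"
  assumes "hopf_LM sH \<Delta>0 \<epsilon> S0 sA lact ract f \<Delta>1 S1"
  defines "G0 \<equiv> {g. group_like sH \<Delta>0 \<epsilon> g}"
      and "G1 \<equiv> {a. a \<noteq> 0 \<and> edge_like sH \<Delta>0 \<epsilon> sA \<Delta>1 a}"
  shows "(\<forall>g\<in>G0. \<forall>a\<in>G1. lact g a \<in> G1 \<and> ract a g \<in> G1) \<and>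
         group_like_graph G0 G1 (edge_src sH \<Delta>0 \<epsilon> sA \<Delta>1) (edge_tgt sH \<Delta>0 \<epsilon> sA \<Delta>1)
           (*) ract lact"
proof -
  have LM: "hopf_LM sH \<Delta>0 \<epsilon> S0 sA lact ract f \<Delta>1 S1" by fact
  have G0d: "G0 = {g. group_like sH \<Delta>0 \<epsilon> g}" using assms(2) by simp
  have G1d: "G1 = {a. a \<noteq> 0 \<and> edge_like sH \<Delta>0 \<epsilon> sA \<Delta>1 a}" using assms(3) by simp
  note H = LM_H[OF LM]
  let ?src = "edge_src sH \<Delta>0 \<epsilon> sA \<Delta>1" and ?tgt = "edge_tgt sH \<Delta>0 \<epsilon> sA \<Delta>1"
  have uniq: "?src a = s \<and> ?tgt a = t"
    if a0: "a \<noteq> 0" and e: "edge_like_st sH \<Delta>0 \<epsilon> sA \<Delta>1 a s t" for a s t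
  proof
    show "?src a = s" unfolding edge_src_def
    proof (rule the_equality)
      show "\<exists>t. edge_like_st sH \<Delta>0 \<epsilon> sA \<Delta>1 a s t" using e by blast
      show "s' = s" if "\<exists>t. edge_like_st sH \<Delta>0 \<epsilon> sA \<Delta>1 a s' t" for s'
        using that edge_unique[OF LM a0 e] by blast
    qed
    show "?tgt a = t" unfolding edge_tgt_def
    proof (rule the_equality)
      show "\<exists>s. edge_like_st sH \<Delta>0 \<epsilon> sA \<Delta>1 a s t" using e by blast
      show "t' = t" if "\<exists>s. edge_like_st sH \<Delta>0 \<epsilon> sA \<Delta>1 a s t'" for t'
        using that edge_unique[OF LM a0 e] by blast
    qed
  qed
  have l0: "lact x 0 = 0" for x using LM_la2[OF LM, of x 0 0] by simp
  have r0: "ract 0 x = 0" for x using LM_ra2[OF LM, of 0 0 x] by simp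
  have G1E: "\<exists>s t. edge_like_st sH \<Delta>0 \<epsilon> sA \<Delta>1 a s t \<and> a \<noteq> 0" if "a \<in> G1" for a
    using that by (auto simp: G1d edge_like_def)
  have glE: "group_like sH \<Delta>0 \<epsilon> s \<and> group_like sH \<Delta>0 \<epsilon> t" if "edge_like_st sH \<Delta>0 \<epsilon> sA \<Delta>1 a s t" for a s t
    using that by (simp add: edge_like_st_def)
  have lact_in: "lact g a \<in> G1 \<and> ?src (lact g a) = g * ?src a \<and> ?tgt (lact g a) = g * ?tgt a"
    if g: "g \<in> G0" and a: "a \<in> G1" for g a
  proof -
    obtain s t where e: "edge_like_st sH \<Delta>0 \<epsilon> sA \<Delta>1 a s t" and a0: "a \<noteq> 0" using G1E[OF a] by blast
    have gg: "group_like sH \<Delta>0 \<epsilon> g" using g by (simp add: G0d)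
    have e': "edge_like_st sH \<Delta>0 \<epsilon> sA \<Delta>1 (lact g a) (g * s) (g * t)" by (rule edge_lact[OF LM gg e])
    have "lact (S0 g) (lact g a) = a"
      using LM_la5[OF LM, of "S0 g" g a, symmetric] gl_antipode[OF H gg] LM_la6[OF LM] by simp
    then have n0: "lact g a \<noteq> 0" using a0 l0 by auto
    show ?thesis using uniq[OF n0 e'] uniq[OF a0 e] n0 e' by (auto simp: G1d edge_like_def)
  qed
  have ract_in: "ract a g \<in> G1 \<and> ?src (ract a g) = ?src a * g \<and> ?tgt (ract a g) = ?tgt a * g"
    if g: "g \<in> G0" and a: "a \<in> G1" for g a
  proof -
    obtain s t where e: "edge_like_st sH \<Delta>0 \<epsilon> sA \<Delta>1 a s t" and a0: "a \<noteq> 0" using G1E[OF a] by blast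
    have gg: "group_like sH \<Delta>0 \<epsilon> g" using g by (simp add: G0d)
    have e': "edge_like_st sH \<Delta>0 \<epsilon> sA \<Delta>1 (ract a g) (s * g) (t * g)" by (rule edge_ract[OF LM gg e])
    have "ract (ract a g) (S0 g) = a"
      using LM_ra5[OF LM, of a g "S0 g", symmetric] gl_antipode[OF H gg] LM_ra6[OF LM] by simp
    then have n0: "ract a g \<noteq> 0" using a0 r0 by auto
    show ?thesis using uniq[OF n0 e'] uniq[OF a0 e] n0 e' by (auto simp: G1d edge_like_def)
  qed
  have st_in: "?src a \<in> G0 \<and> ?tgt a \<in> G0" if a: "a \<in> G1" for a
  proof -
    obtain s t where e: "edge_like_st sH \<Delta>0 \<epsilon> sA \<Delta>1 a s t" and a0: "a \<noteq> 0" using G1E[OF a] by blast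
    show ?thesis using uniq[OF a0 e] glE[OF e] by (simp add: G0d)
  qed
  have mul: "x * y \<in> G0" if "x \<in> G0" "y \<in> G0" for x y
    using that gl_mult[OF H] by (simp add: G0d)
  have one: "1 \<in> G0" using HA_d1[OF H] HA_e1[OF H] by (simp add: G0d group_like_def)
  have inv: "\<exists>y\<in>G0. x * y = 1 \<and> y * x = 1" if "x \<in> G0" for x
  proof -
    have gx: "group_like sH \<Delta>0 \<epsilon> x" using that by (simp add: G0d)
    show ?thesis using gl_inv[OF H gx] gl_antipode[OF H gx] by (auto simp: G0d)
  qed
  have unit: "\<exists>u\<in>G0. (\<forall>x\<in>G0. u * x = x \<and> x * u = x) \<and> (\<forall>x\<in>G0. \<exists>y\<in>G0. x * y = u \<and> y * x = u)"
    using one inv by (intro bexI[of _ 1]) auto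
  show ?thesis
    unfolding group_like_graph_def
    using lact_in ract_in st_in mul unit
    by (auto simp: mult.assoc LM_ra5[OF LM] LM_lr[OF LM] LM_la5[OF LM])
qed

end
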